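(* Let $\mathcal{H}_A$ and $\mathcal{H}_B$ be finite-dimensional complex Hilbert spaces, let $T_A\in B(\mathcal{H}_A)$, $T_B\in B(\mathcal{H}_B)$ be self-adjoint, and let $K:=T_A\otimes I - I\otimes T_B$, and assume $K\neq 0$. Let $\kappa:=\min\{|\lambda|:\lambda\in\sigma(K),\ \lambda\ne 0\}$. Let $\epsilon\ge0$ and let $H\in B(\mathcal{H}_A\otimes\mathcal{H}_B)$ be self-adjoint with $\|[H,K]\|\le\epsilon$. Let $|\psi(0)\rangle\in\ker(K)$ with $\||\psi(0)\rangle\|=1$ and $|\psi(t)\rangle=e^{-iHt}|\psi(0)\rangle$. Then for all $t\in\mathbb{R}$, $\|\Pi_{\ker K}|\psi(t)\rangle\|^2\ge 1-\epsilon^2t^2/\kappa^2$, where $\Pi_{\ker K}$ is the orthogonal projection onto $\ker(K)$.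
   Context: $\sigma(K)$ is the spectrum of $K$; $\kappa$ is called the spectral gap of $K$. $\|\cdot\|$ on operators is the operator norm. *)

theory Defs
  imports Complex_Main
    "Jordan_Normal_Form.Spectral_Radius"
    "Jordan_Normal_Form.Schur_Decomposition"
    "Jordan_Normal_Form.Matrix_Kernel"
begin

text \<open>Finite-dimensional complex Hilbert spaces are modelled as C^m with
  the standard inner product; operators are complex matrices.\<close>

text \<open>Kronecker (tensor) product of matrices: A (p x q), B (r x s) gives a (p*r) x (q*s) matrix,
  with the standard index convention (i = i1*r + i2).\<close>
definition kron :: "complex mat \<Rightarrow> complex mat \<Rightarrow> complex mat" where
  "kron A B = mat (dim_row A * dim_row B) (dim_col A * dim_col B)
     (\<lambda>(i, j). A $$ (i div dim_row B, j div dim_col B) * B $$ (i mod dim_row B, j mod dim_col B))"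

definition self_adjoint :: "complex mat \<Rightarrow> bool" where
  "self_adjoint A \<longleftrightarrow> square_mat A \<and> mat_adjoint A = A"

definition vnorm :: "complex vec \<Rightarrow> real" where
  "vnorm v = sqrt (\<Sum>i<dim_vec v. (cmod (v $ i))\<^sup>2)"

definition opnorm :: "complex mat \<Rightarrow> real" where
  "opnorm A = Sup {vnorm (A *\<^sub>v v) | v. v \<in> carrier_vec (dim_col A) \<and> vnorm v \<le> 1}"

definition mexp :: "complex mat \<Rightarrow> complex mat" where
  "mexp A = mat (dim_row A) (dim_col A)
     (\<lambda>(i, j). \<Sum>k. (A ^\<^sub>m k) $$ (i, j) / of_nat (fact k))"

definition orth_proj :: "complex vec set \<Rightarrow> complex vec \<Rightarrow> complex vec" where
  "orth_proj V x = (THE p. p \<in> V \<and> (\<forall>w\<in>V. (x - p) \<bullet>c w = 0))"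

definition spectral_gap :: "complex mat \<Rightarrow> real" where
  "spectral_gap K = Min {cmod l | l. l \<in> spectrum K \<and> l \<noteq> 0}"

end

theory Submission
  imports Defs
begin

lemma adj_dim[simp]: "dim_row (mat_adjoint A) = dim_col A" "dim_col (mat_adjoint A) = dim_row A"
  unfolding mat_adjoint_def by auto

lemma adj_index[simp]: fixes A :: "complex mat" shows "i < dim_col A \<Longrightarrow> j < dim_row A \<Longrightarrow> mat_adjoint A $$ (i,j) = cnj (A $$ (j,i))"
  unfolding mat_adjoint_def by (simp add: mat_of_rows_def)

lemma adj_carrier[simp]: "A \<in> carrier_mat n m \<Longrightarrow> mat_adjoint A \<in> carrier_mat m n"
  by auto

lemma mult_index_sum: "i < dim_row A \<Longrightarrow> j < dim_col B \<Longrightarrow> dim_col A = dim_row B \<Longrightarrow> (A * B) $$ (i,j) = (\<Sum>k<dim_row B. A $$ (i,k) * B $$ (k,j))"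
  by (simp add: scalar_prod_def atLeast0LessThan)

lemma adj_adj[simp]: fixes A :: "complex mat" shows "mat_adjoint (mat_adjoint A) = A"
  by (rule eq_matI) auto

lemma adj_mult: fixes A :: "complex mat" shows "A \<in> carrier_mat n k \<Longrightarrow> B \<in> carrier_mat k m \<Longrightarrow> mat_adjoint (A * B) = mat_adjoint B * mat_adjoint A"
  by (rule eq_matI) (auto simp: scalar_prod_def mult.commute intro!: sum.cong)

lemma adj_one[simp]: "mat_adjoint (1\<^sub>m n :: complex mat) = 1\<^sub>m n"
  by (rule eq_matI) auto

lemma adj_minus: fixes A :: "complex mat" shows "A \<in> carrier_mat n m \<Longrightarrow> B \<in> carrier_mat n m \<Longrightarrow> mat_adjoint (A - B) = mat_adjoint A - mat_adjoint B"
  by (rule eq_matI) auto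




lemma cscalar_self: fixes w :: "complex vec"
  shows "w \<bullet>c w = of_real (\<Sum>i<dim_vec w. (cmod (w$i))^2)"
  apply (simp add: scalar_prod_def atLeast0LessThan of_real_sum)
  apply (rule sum.cong, simp)
  apply (metis complex_norm_square of_real_power)
  done

definition bd :: "complex \<Rightarrow> complex mat \<Rightarrow> complex mat" where
  "bd a B = mat (Suc (dim_row B)) (Suc (dim_col B)) (\<lambda>(i,j). if i = 0 \<and> j = 0 then a else if i = 0 \<or> j = 0 then 0 else B $$ (i - 1, j - 1))"

definition dg :: "nat \<Rightarrow> (nat \<Rightarrow> complex) \<Rightarrow> complex mat" where
  "dg n d = mat n n (\<lambda>(i,j). if i = j then d i else 0)"

lemma bd_carrier[simp]: "B \<in> carrier_mat n n \<Longrightarrow> bd a B \<in> carrier_mat (Suc n) (Suc n)"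
  unfolding bd_def by auto

lemma dg_carrier[simp]: "dg n d \<in> carrier_mat n n"
  unfolding dg_def by auto

lemma sum_lessThan_Suc_shift': "(\<Sum>k<Suc n. f k) = f 0 + (\<Sum>k<n. f (Suc k))"
  by (rule sum.lessThan_Suc_shift)

lemma bd_mult: assumes "B \<in> carrier_mat n n" "C \<in> carrier_mat n n"
  shows "bd a B * bd c C = bd (a * c) (B * C)"
proof (rule eq_matI)
  fix i j assume "i < dim_row (bd (a * c) (B * C))" "j < dim_col (bd (a * c) (B * C))"
  hence ij: "i < Suc n" "j < Suc n" using assms by (auto simp: bd_def)
  have "(bd a B * bd c C) $$ (i,j) = (\<Sum>k<Suc n. bd a B $$ (i,k) * bd c C $$ (k,j))"
    using assms ij by (subst mult_index_sum) (auto simp: bd_def)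
  also have "\<dots> = bd (a * c) (B * C) $$ (i,j)"
  proof (cases i)
    case 0
    then show ?thesis unfolding sum_lessThan_Suc_shift' using assms ij
      by (cases j) (auto simp: bd_def)
  next
    case (Suc i')
    show ?thesis
    proof (cases j)
      case 0
      then show ?thesis unfolding sum_lessThan_Suc_shift' using assms ij Suc by (auto simp: bd_def)
    next
      case (Suc j')
      have "(B * C) $$ (i', j') = (\<Sum>k<n. B $$ (i',k) * C $$ (k,j'))"
        using assms ij \<open>i = Suc i'\<close> Suc by (subst mult_index_sum) auto
      then show ?thesis unfolding sum_lessThan_Suc_shift' using assms ij Suc \<open>i = Suc i'\<close>
        by (simp add: bd_def)
    qed
  qed
  finally show "(bd a B * bd c C) $$ (i,j) = bd (a * c) (B * C) $$ (i,j)" .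
qed (use assms in \<open>auto simp: bd_def\<close>)

lemma bd_adj: "mat_adjoint (bd a B) = bd (cnj a) (mat_adjoint B)"
  by (rule eq_matI) (auto simp: bd_def)

lemma bd_one: "bd 1 (1\<^sub>m n) = 1\<^sub>m (Suc n)"
  by (rule eq_matI) (auto simp: bd_def)

lemma bd_dg: "bd a (dg n d) = dg (Suc n) (\<lambda>i. if i = 0 then a else d (i - 1))"
  by (rule eq_matI) (auto simp: bd_def dg_def)

lemma unitary_ext:
  fixes v :: "complex vec"
  assumes v: "v \<in> carrier_vec n" and v0: "v \<noteq> 0\<^sub>v n"
  shows "\<exists>W c. W \<in> carrier_mat n n \<and> mat_adjoint W * W = 1\<^sub>m n \<and> col W 0 = c \<cdot>\<^sub>v v"
proof -
  interpret cof_vec_space n "TYPE(complex)" .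
  note b = basis_completion[OF v v0]
  define ws where "ws = gram_schmidt n (basis_completion v)"
  note g = gram_schmidt_result[OF b(2) b(4) b(5) ws_def]
  have len: "length ws = n" using g(4) b(6) by simp
  have hd: "hd ws = v" unfolding ws_def basis_completion_def Let_def using v by simp
  have n0: "n > 0" using v v0 by (cases n) auto
  define nf where "nf = (\<lambda>w::complex vec. complex_of_real (1 / sqrt (Re (w \<bullet>c w))))"
  define W where "W = mat_of_cols n (map (\<lambda>w. nf w \<cdot>\<^sub>v w) ws)"
  have Wc: "W \<in> carrier_mat n n" unfolding W_def using mat_of_cols_carrier(1)[of n "map (\<lambda>w. nf w \<cdot>\<^sub>v w) ws"] len by (simp only: length_map)
  have wc: "\<And>i. i < n \<Longrightarrow> ws ! i \<in> carrier_vec n" using g(3) len nth_mem by blast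
  have Wij: "\<And>i j. i < n \<Longrightarrow> j < n \<Longrightarrow> W $$ (i,j) = nf (ws!j) * (ws ! j) $ i"
    unfolding W_def using len wc
    apply (simp only: mat_of_cols_def index_mat length_map nth_map split)
    by (metis carrier_vecD index_smult_vec(1))
  have "mat_adjoint W * W = 1\<^sub>m n"
  proof (rule eq_matI)
    fix i j assume i: "i < dim_row (1\<^sub>m n :: complex mat)" and j: "j < dim_col (1\<^sub>m n :: complex mat)"
    hence i: "i < n" and j: "j < n" by auto
    have "(mat_adjoint W * W) $$ (i,j) = (\<Sum>k<n. cnj (W $$ (k,i)) * W $$ (k,j))"
      using Wc i j by (subst mult_index_sum) (auto intro!: sum.cong)
    also have "\<dots> = cnj (nf (ws!i)) * nf (ws!j) * (\<Sum>k<n. (ws!j) $ k * cnj ((ws!i) $ k))"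
      by (simp add: Wij i j sum_distrib_left mult_ac)
    also have "(\<Sum>k<n. (ws!j) $ k * cnj ((ws!i) $ k)) = ws ! j \<bullet>c ws ! i"
      using wc[OF i] wc[OF j] by (simp add: scalar_prod_def atLeast0LessThan)
    finally have eq: "(mat_adjoint W * W) $$ (i,j) = cnj (nf (ws!i)) * nf (ws!j) * (ws ! j \<bullet>c ws ! i)" .
    show "(mat_adjoint W * W) $$ (i,j) = 1\<^sub>m n $$ (i,j)"
    proof (cases "i = j")
      case False
      then show ?thesis using eq corthogonalD[OF g(2), of j i] len i j by auto
    next
      case True
      define s where "s = (\<Sum>k<dim_vec (ws!i). (cmod ((ws!i)$k))^2)"
      have ne: "ws ! i \<bullet>c ws ! i \<noteq> 0" using corthogonalD[OF g(2), of i i] len i by auto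
      have sv: "ws ! i \<bullet>c ws ! i = of_real s" unfolding s_def by (rule cscalar_self)
      have s0: "s > 0" using ne sv s_def by (metis of_real_0 order_le_neq_trans sum_nonneg zero_le_power2)
      have "cnj (nf (ws!i)) * nf (ws!i) * of_real s = of_real ((1 / sqrt s) * (1 / sqrt s) * s)"
        unfolding nf_def sv by (simp only: complex_cnj_complex_of_real Re_complex_of_real of_real_mult)
      also have "(1 / sqrt s) * (1 / sqrt s) * s = 1" using s0
        by (simp add: field_simps)
      finally show ?thesis using eq True sv i by simp
    qed
  qed (use Wc in auto)
  moreover have "col W 0 = nf v \<cdot>\<^sub>v v"
    unfolding W_def using n0 len hd
    by (metis (no_types, lifting) col_mat_of_cols hd_conv_nth length_greater_0_conv length_map nth_map
        smult_carrier_vec v)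
  ultimately show ?thesis using Wc by blast
qed

lemma herm_diag:
  fixes A :: "complex mat"
  assumes "A \<in> carrier_mat n n" "mat_adjoint A = A"
  shows "\<exists>U d. U \<in> carrier_mat n n \<and> mat_adjoint U * U = 1\<^sub>m n \<and> A * U = U * dg n d"
  using assms
proof (induction n arbitrary: A)
  case 0
  then show ?case by (intro exI[of _ "1\<^sub>m 0"] exI[of _ "\<lambda>_. 0"]) (auto intro!: eq_matI simp: dg_def)
next
  case (Suc n)
  note A = Suc.prems(1) and herm = Suc.prems(2)
  obtain e where "e \<in> spectrum A" using spectrum_non_empty[OF A] by auto
  then obtain v where ev: "eigenvector A v e" unfolding spectrum_def eigenvalue_def by auto
  hence v: "v \<in> carrier_vec (Suc n)" "v \<noteq> 0\<^sub>v (Suc n)" "A *\<^sub>v v = e \<cdot>\<^sub>v v"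
    using A unfolding eigenvector_def by auto
  obtain W c where W: "W \<in> carrier_mat (Suc n) (Suc n)" and WW: "mat_adjoint W * W = 1\<^sub>m (Suc n)"
    and c: "col W 0 = c \<cdot>\<^sub>v v" using unitary_ext[OF v(1,2)] by blast
  have WW': "W * mat_adjoint W = 1\<^sub>m (Suc n)"
    using mat_mult_left_right_inverse[OF adj_carrier[OF W] W WW] .
  have Acol: "A *\<^sub>v col W 0 = e \<cdot>\<^sub>v col W 0"
    unfolding c using v A by (simp add: mult_mat_vec smult_smult_assoc mult.commute)
  define A' where "A' = mat_adjoint W * A * W"
  have A'c: "A' \<in> carrier_mat (Suc n) (Suc n)" unfolding A'_def using W A by auto
  have A'h: "mat_adjoint A' = A'"
  proof -
    have c1: "mat_adjoint W * A \<in> carrier_mat (Suc n) (Suc n)" using mult_carrier_mat[OF adj_carrier[OF W] A] .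
    have "mat_adjoint A' = mat_adjoint W * mat_adjoint (mat_adjoint W * A)"
      unfolding A'_def using adj_mult[OF c1 W] .
    also have "mat_adjoint (mat_adjoint W * A) = mat_adjoint A * W"
      using adj_mult[OF adj_carrier[OF W] A] by simp
    finally show ?thesis unfolding A'_def herm using W A
      by (simp add: assoc_mult_mat[of _ "Suc n" "Suc n"])
  qed
  have col0: "A' $$ (i, 0) = (if i = 0 then e else 0)" if i: "i < Suc n" for i
  proof -
    have "A' $$ (i,0) = (mat_adjoint W * (A * W)) $$ (i,0)"
      unfolding A'_def using W A by (simp add: assoc_mult_mat[of _ "Suc n" "Suc n"])
    also have "\<dots> = row (mat_adjoint W) i \<bullet> col (A * W) 0" using W A i by simp
    also have "col (A * W) 0 = e \<cdot>\<^sub>v col W 0" using col_mult2[OF A W, of 0] Acol by simp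
    also have "row (mat_adjoint W) i \<bullet> (e \<cdot>\<^sub>v col W 0) = e * (row (mat_adjoint W) i \<bullet> col W 0)"
      using W i by (simp add: scalar_prod_smult_distrib[of _ "Suc n"])
    also have "row (mat_adjoint W) i \<bullet> col W 0 = (mat_adjoint W * W) $$ (i,0)" using W i by simp
    finally show ?thesis using WW i by simp
  qed
  have e_real: "cnj e = e"
    using col0[of 0] A'h A'c by (metis adj_index carrier_matD(1,2) zero_less_Suc)
  have row0: "A' $$ (0, j) = (if j = 0 then e else 0)" if j: "j < Suc n" for j
  proof -
    have "A' $$ (0, j) = mat_adjoint A' $$ (0, j)" using A'h by simp
    also have "\<dots> = cnj (A' $$ (j, 0))" using A'c j by simp
    finally show ?thesis using col0[OF j] e_real by simp
  qed
  define A3 where "A3 = mat n n (\<lambda>(i,j). A' $$ (Suc i, Suc j))"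
  have A3c: "A3 \<in> carrier_mat n n" unfolding A3_def by simp
  have A3h: "mat_adjoint A3 = A3"
  proof (rule eq_matI)
    fix i j assume "i < dim_row A3" "j < dim_col A3"
    hence ij: "i < n" "j < n" unfolding A3_def by auto
    have "A' $$ (Suc i, Suc j) = mat_adjoint A' $$ (Suc i, Suc j)" using A'h by simp
    thus "mat_adjoint A3 $$ (i, j) = A3 $$ (i, j)" using ij A'c unfolding A3_def by simp
  qed (auto simp: A3_def)
  have A'bd: "A' = bd e A3"
  proof (rule eq_matI)
    fix i j assume "i < dim_row (bd e A3)" "j < dim_col (bd e A3)"
    hence ij: "i < Suc n" "j < Suc n" unfolding bd_def A3_def by auto
    show "A' $$ (i, j) = bd e A3 $$ (i, j)"
      using ij col0 row0 unfolding bd_def A3_def by (cases i; cases j) auto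
  qed (use A'c in \<open>auto simp: bd_def A3_def\<close>)
  obtain U3 d3 where U3: "U3 \<in> carrier_mat n n" and U3U: "mat_adjoint U3 * U3 = 1\<^sub>m n"
    and AU3: "A3 * U3 = U3 * dg n d3" using Suc.IH[OF A3c A3h] by blast
  define E where "E = bd 1 U3"
  define D where "D = bd e (dg n d3)"
  have Ec: "E \<in> carrier_mat (Suc n) (Suc n)" unfolding E_def using U3 by simp
  have A'E: "A' * E = E * D"
    unfolding A'bd E_def D_def using U3 A3c AU3 by (simp add: bd_mult)
  have EE: "mat_adjoint E * E = 1\<^sub>m (Suc n)"
    unfolding E_def bd_adj using bd_mult[OF adj_carrier[OF U3] U3, of 1 1] U3U bd_one by simp
  define U where "U = W * E"
  have Uc: "U \<in> carrier_mat (Suc n) (Suc n)" unfolding U_def using W Ec by simp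
  have WH: "mat_adjoint W \<in> carrier_mat (Suc n) (Suc n)" using W by simp
  have EH: "mat_adjoint E \<in> carrier_mat (Suc n) (Suc n)" using Ec by simp
  have WE: "W * E \<in> carrier_mat (Suc n) (Suc n)" using W Ec by simp
  have Dc: "D \<in> carrier_mat (Suc n) (Suc n)" unfolding D_def by simp
  have "mat_adjoint U * U = (mat_adjoint E * mat_adjoint W) * (W * E)"
    unfolding U_def using adj_mult[OF W Ec] by simp
  also have "\<dots> = mat_adjoint E * (mat_adjoint W * (W * E))"
    using assoc_mult_mat[OF EH WH WE] .
  also have "mat_adjoint W * (W * E) = E"
    using assoc_mult_mat[OF WH W Ec] WW Ec by simp
  finally have UU: "mat_adjoint U * U = 1\<^sub>m (Suc n)" using EE by simp
  have A'c2: "mat_adjoint W * A \<in> carrier_mat (Suc n) (Suc n)" using WH A by simp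
  have AWE: "A * (W * E) \<in> carrier_mat (Suc n) (Suc n)" using A WE by simp
  have "A * U = (W * mat_adjoint W) * (A * (W * E))"
    unfolding U_def WW' using left_mult_one_mat[OF AWE] by simp
  also have "\<dots> = W * (mat_adjoint W * (A * (W * E)))"
    using assoc_mult_mat[OF W WH AWE] .
  also have "mat_adjoint W * (A * (W * E)) = (mat_adjoint W * A) * (W * E)"
    using assoc_mult_mat[OF WH A WE] by simp
  also have "\<dots> = ((mat_adjoint W * A) * W) * E"
    using assoc_mult_mat[OF A'c2 W Ec] by simp
  also have "\<dots> = E * D" unfolding A'E[unfolded A'_def] ..
  also have "W * (E * D) = U * D"
    unfolding U_def using assoc_mult_mat[OF W Ec Dc] by simp
  finally have "A * U = U * D" .
  then show ?case using Uc UU unfolding D_def bd_dg by blast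
qed

lemma mult_vec_sum: "A \<in> carrier_mat n m \<Longrightarrow> v \<in> carrier_vec m \<Longrightarrow> i < n \<Longrightarrow>
  (A *\<^sub>v v) $ i = (\<Sum>j<m. A $$ (i,j) * v $ j)"
  by (auto simp: scalar_prod_def atLeast0LessThan)

lemma cinner_sum: "w \<in> carrier_vec n \<Longrightarrow> v \<bullet>c w = (\<Sum>i<n. v $ i * cnj (w $ i))"
  by (auto simp: scalar_prod_def atLeast0LessThan)

lemma cinner_adj:
  fixes A :: "complex mat"
  assumes A: "A \<in> carrier_mat n m" and v: "v \<in> carrier_vec m" and w: "w \<in> carrier_vec n"
  shows "(A *\<^sub>v v) \<bullet>c w = v \<bullet>c (mat_adjoint A *\<^sub>v w)"
proof -
  have "(A *\<^sub>v v) \<bullet>c w = (\<Sum>i<n. (\<Sum>j<m. A $$ (i,j) * v $ j) * cnj (w $ i))"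
    using A v w by (auto simp: cinner_sum[OF w] scalar_prod_def atLeast0LessThan intro!: sum.cong)
  also have "\<dots> = (\<Sum>j<m. v $ j * cnj (\<Sum>i<n. cnj (A $$ (i,j)) * w $ i))"
    by (simp add: sum_distrib_left sum_distrib_right mult_ac sum.swap[of _ "{..<n}"])
  also have "\<dots> = v \<bullet>c (mat_adjoint A *\<^sub>v w)"
    using A v w by (auto simp: cinner_sum[of _ m] scalar_prod_def atLeast0LessThan intro!: sum.cong)
  finally show ?thesis .
qed

lemma vnorm_nonneg: "vnorm v \<ge> 0"
  unfolding vnorm_def by (simp add: sum_nonneg)

lemma vnorm_sq: "(vnorm v)^2 = (\<Sum>i<dim_vec v. (cmod (v $ i))^2)"
  unfolding vnorm_def by (simp add: sum_nonneg)

lemma cinner_self_vnorm: fixes v :: "complex vec" shows "v \<bullet>c v = of_real ((vnorm v)^2)"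
  unfolding vnorm_sq by (rule cscalar_self)

lemma unitary_vnorm:
  fixes U :: "complex mat"
  assumes U: "U \<in> carrier_mat n n" and UU: "mat_adjoint U * U = 1\<^sub>m n" and w: "w \<in> carrier_vec n"
  shows "vnorm (U *\<^sub>v w) = vnorm w"
proof -
  have "(U *\<^sub>v w) \<bullet>c (U *\<^sub>v w) = w \<bullet>c (mat_adjoint U *\<^sub>v (U *\<^sub>v w))"
    using cinner_adj[OF U w] U w by simp
  also have "mat_adjoint U *\<^sub>v (U *\<^sub>v w) = w"
    using assoc_mult_mat_vec[OF adj_carrier[OF U] U w] UU w by simp
  finally have "of_real ((vnorm (U *\<^sub>v w))^2) = (of_real ((vnorm w)^2) :: complex)"
    by (simp add: cinner_self_vnorm)
  hence "(vnorm (U *\<^sub>v w))^2 = (vnorm w)^2" using of_real_eq_iff by blast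
  thus ?thesis using power2_eq_imp_eq[OF _ vnorm_nonneg vnorm_nonneg] by blast
qed

lemma dg_mult_vec: "y \<in> carrier_vec n \<Longrightarrow> dg n f *\<^sub>v y = vec n (\<lambda>k. f k * y $ k)"
proof (rule eq_vecI)
  fix i assume y: "y \<in> carrier_vec n" and i: "i < dim_vec (vec n (\<lambda>k. f k * y $ k))"
  hence i: "i < n" by simp
  have "(dg n f *\<^sub>v y) $ i = (\<Sum>j<n. dg n f $$ (i,j) * y $ j)" using mult_vec_sum[OF dg_carrier y i] .
  also have "\<dots> = (\<Sum>j<n. if j = i then f i * y $ i else 0)"
    using i by (intro sum.cong) (auto simp: dg_def)
  also have "\<dots> = f i * y $ i" using i by simp
  finally show "(dg n f *\<^sub>v y) $ i = vec n (\<lambda>k. f k * y $ k) $ i" using i by simp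
qed (auto simp: dg_def)

lemma mat_vec_zero[simp]: "A \<in> carrier_mat n m \<Longrightarrow> A *\<^sub>v 0\<^sub>v m = 0\<^sub>v n"
  by (intro eq_vecI) (auto simp: scalar_prod_def)

lemma herm_gap:
  fixes K :: "complex mat"
  assumes K: "K \<in> carrier_mat N N" and Kh: "mat_adjoint K = K" and K0: "K \<noteq> 0\<^sub>m N N"
  shows "spectral_gap K > 0"
   and "\<And>x. x \<in> carrier_vec N \<Longrightarrow> orth_proj (mat_kernel K) x \<in> carrier_vec N"
   and "\<And>x. x \<in> carrier_vec N \<Longrightarrow> (vnorm (orth_proj (mat_kernel K) x))^2 = (vnorm x)^2 - (vnorm (x - orth_proj (mat_kernel K) x))^2"
   and "\<And>x. x \<in> carrier_vec N \<Longrightarrow> spectral_gap K * vnorm (x - orth_proj (mat_kernel K) x) \<le> vnorm (K *\<^sub>v x)"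
proof -
  obtain U d where U: "U \<in> carrier_mat N N" and UU: "mat_adjoint U * U = 1\<^sub>m N"
    and KU: "K * U = U * dg N d" using herm_diag[OF K Kh] by blast
  have UH: "mat_adjoint U \<in> carrier_mat N N" using U by simp
  have UU': "U * mat_adjoint U = 1\<^sub>m N" using mat_mult_left_right_inverse[OF UH U UU] .
  define D where "D = dg N d"
  have Dc: "D \<in> carrier_mat N N" unfolding D_def by simp
  have UHU: "\<And>w. w \<in> carrier_vec N \<Longrightarrow> mat_adjoint U *\<^sub>v (U *\<^sub>v w) = w"
    using assoc_mult_mat_vec[OF UH U] UU by simp
  have UUH: "\<And>w. w \<in> carrier_vec N \<Longrightarrow> U *\<^sub>v (mat_adjoint U *\<^sub>v w) = w"
    using assoc_mult_mat_vec[OF U UH] UU' by simp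
  have KUv: "\<And>z. z \<in> carrier_vec N \<Longrightarrow> K *\<^sub>v (U *\<^sub>v z) = U *\<^sub>v (D *\<^sub>v z)"
  proof -
    fix z :: "complex vec" assume z: "z \<in> carrier_vec N"
    have "K *\<^sub>v (U *\<^sub>v z) = (K * U) *\<^sub>v z" using assoc_mult_mat_vec[OF K U z] by simp
    also have "\<dots> = U *\<^sub>v (D *\<^sub>v z)" unfolding KU D_def using assoc_mult_mat_vec[OF U dg_carrier z] .
    finally show "K *\<^sub>v (U *\<^sub>v z) = U *\<^sub>v (D *\<^sub>v z)" .
  qed
  have DK: "\<And>w. w \<in> carrier_vec N \<Longrightarrow> D *\<^sub>v (mat_adjoint U *\<^sub>v w) = mat_adjoint U *\<^sub>v (K *\<^sub>v w)"
  proof -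
    fix w :: "complex vec" assume w: "w \<in> carrier_vec N"
    have z: "mat_adjoint U *\<^sub>v w \<in> carrier_vec N" using UH w by simp
    have "mat_adjoint U *\<^sub>v (K *\<^sub>v w) = mat_adjoint U *\<^sub>v (K *\<^sub>v (U *\<^sub>v (mat_adjoint U *\<^sub>v w)))"
      using UUH[OF w] by simp
    also have "\<dots> = D *\<^sub>v (mat_adjoint U *\<^sub>v w)" unfolding KUv[OF z]
      using UHU Dc z by simp
    finally show "D *\<^sub>v (mat_adjoint U *\<^sub>v w) = mat_adjoint U *\<^sub>v (K *\<^sub>v w)" by simp
  qed
  have Dv: "\<And>z. z \<in> carrier_vec N \<Longrightarrow> D *\<^sub>v z = vec N (\<lambda>k. d k * z $ k)"
    unfolding D_def by (rule dg_mult_vec)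
  have ev_d: "d k \<in> spectrum K" if k: "k < N" for k
  proof -
    have cU: "col U k \<in> carrier_vec N" by (rule carrier_vecI) (use U in simp)
    have "col U k \<noteq> 0\<^sub>v N"
    proof
      assume "col U k = 0\<^sub>v N"
      hence "(mat_adjoint U * U) $$ (k,k) = 0" using U k UH
        by (simp add: scalar_prod_def)
      thus False using UU k by simp
    qed
    moreover have "K *\<^sub>v col U k = d k \<cdot>\<^sub>v col U k"
    proof (rule eq_vecI)
      fix i assume "i < dim_vec (d k \<cdot>\<^sub>v col U k)"
      hence i: "i < N" using U by simp
      have "(K *\<^sub>v col U k) $ i = (K * U) $$ (i,k)" using K U i k by simp
      also have "\<dots> = (U * D) $$ (i,k)" using KU D_def by simp
      also have "\<dots> = (\<Sum>j<N. U $$ (i,j) * D $$ (j,k))" using U Dc i k by (subst mult_index_sum) auto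
      also have "\<dots> = (\<Sum>j<N. if j = k then U $$ (i,k) * d k else 0)"
        using k by (intro sum.cong) (auto simp: D_def dg_def)
      also have "\<dots> = d k * U $$ (i,k)" using k by simp
      finally show "(K *\<^sub>v col U k) $ i = (d k \<cdot>\<^sub>v col U k) $ i" using i U k by simp
    qed (use K U in auto)
    ultimately show ?thesis using cU K unfolding spectrum_def eigenvalue_def eigenvector_def by auto
  qed
  have spec_d: "\<exists>k<N. l = d k" if l: "l \<in> spectrum K" for l
  proof -
    obtain v where v: "v \<in> carrier_vec N" "v \<noteq> 0\<^sub>v N" "K *\<^sub>v v = l \<cdot>\<^sub>v v"
      using l K unfolding spectrum_def eigenvalue_def eigenvector_def by auto
    define z where "z = mat_adjoint U *\<^sub>v v"
    have z: "z \<in> carrier_vec N" unfolding z_def using UH v by simp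
    have "z \<noteq> 0\<^sub>v N"
    proof
      assume "z = 0\<^sub>v N"
      hence "v = U *\<^sub>v 0\<^sub>v N" using UUH[OF v(1)] unfolding z_def by simp
      thus False using v mat_vec_zero[OF U] by simp
    qed
    have "\<exists>k<N. z $ k \<noteq> 0"
    proof (rule ccontr)
      assume "\<not> (\<exists>k<N. z $ k \<noteq> 0)"
      hence "z = 0\<^sub>v N" using z by (intro eq_vecI) auto
      thus False using \<open>z \<noteq> 0\<^sub>v N\<close> by simp
    qed
    then obtain k where k: "k < N" "z $ k \<noteq> 0" by blast
    have "D *\<^sub>v z = l \<cdot>\<^sub>v z" unfolding z_def DK[OF v(1)] v(3) using mult_mat_vec[OF UH v(1)] .
    hence "(D *\<^sub>v z) $ k = l * z $ k" using k z by simp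
    hence "d k * z $ k = l * z $ k" using Dv[OF z] k by simp
    thus ?thesis using k by auto
  qed
  define S where "S = {cmod l | l. l \<in> spectrum K \<and> l \<noteq> 0}"
  have S_eq: "S = {cmod (d k) | k. k < N \<and> d k \<noteq> 0}"
    unfolding S_def using ev_d spec_d by blast
  have finS: "finite S" unfolding S_eq by simp
  have "\<exists>k<N. d k \<noteq> 0"
  proof (rule ccontr)
    assume "\<not> ?thesis"
    hence D0: "D = 0\<^sub>m N N" unfolding D_def dg_def by (auto intro!: eq_matI)
    have "K = K * (U * mat_adjoint U)" using UU' K by simp
    also have "\<dots> = (K * U) * mat_adjoint U" using assoc_mult_mat[OF K U UH] by simp
    also have "\<dots> = 0\<^sub>m N N" unfolding KU D_def[symmetric] D0 using U UH by simp
    finally show False using K0 by simp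
  qed
  hence neS: "S \<noteq> {}" unfolding S_eq by auto
  have gap: "spectral_gap K = Min S" unfolding spectral_gap_def S_def ..
  have gap_pos: "spectral_gap K > 0" unfolding gap using finS neS unfolding S_eq by auto
  have gap_le: "spectral_gap K \<le> cmod (d k)" if "k < N" "d k \<noteq> 0" for k
    unfolding gap using finS that unfolding S_eq by (intro Min_le) auto
  show "spectral_gap K > 0" by (rule gap_pos)
  {
    fix x :: "complex vec" assume x: "x \<in> carrier_vec N"
    define z where "z = mat_adjoint U *\<^sub>v x"
    have z: "z \<in> carrier_vec N" unfolding z_def using UH x by simp
    define z0 where "z0 = vec N (\<lambda>k. if d k = 0 then z $ k else 0)"
    define z1 where "z1 = vec N (\<lambda>k. if d k = 0 then 0 else z $ k)"
    have z0: "z0 \<in> carrier_vec N" and z1: "z1 \<in> carrier_vec N" unfolding z0_def z1_def by auto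
    define p where "p = U *\<^sub>v z0"
    have p: "p \<in> carrier_vec N" unfolding p_def using U z0 by simp
    have xz: "x = U *\<^sub>v z" unfolding z_def using UUH[OF x] by simp
    have xp: "x - p = U *\<^sub>v z1"
    proof -
      have "x - p = U *\<^sub>v (z - z0)" unfolding xz p_def using mult_minus_distrib_mat_vec[OF U z z0] by simp
      also have "z - z0 = z1" unfolding z0_def z1_def using z by (intro eq_vecI) auto
      finally show ?thesis .
    qed
    have pker: "p \<in> mat_kernel K"
    proof -
      have "D *\<^sub>v z0 = 0\<^sub>v N" unfolding Dv[OF z0] by (intro eq_vecI) (auto simp: z0_def)
      hence "K *\<^sub>v p = 0\<^sub>v N" unfolding p_def KUv[OF z0] using mat_vec_zero[OF U] by simp
      thus ?thesis using p K unfolding mat_kernel_def by simp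
    qed
    have orth: "(x - p) \<bullet>c w = 0" if w: "w \<in> mat_kernel K" for w
    proof -
      have wc: "w \<in> carrier_vec N" and Kw: "K *\<^sub>v w = 0\<^sub>v N" using w K unfolding mat_kernel_def by auto
      define \<zeta> where "\<zeta> = mat_adjoint U *\<^sub>v w"
      have \<zeta>: "\<zeta> \<in> carrier_vec N" unfolding \<zeta>_def using UH wc by simp
      have "D *\<^sub>v \<zeta> = 0\<^sub>v N" unfolding \<zeta>_def DK[OF wc] Kw using mat_vec_zero[OF UH] by simp
      hence dz: "\<And>k. k < N \<Longrightarrow> d k * \<zeta> $ k = 0"
      proof -
        fix k assume k: "k < N" and e: "D *\<^sub>v \<zeta> = 0\<^sub>v N"
        have "(D *\<^sub>v \<zeta>) $ k = 0" using e k by simp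
        thus "d k * \<zeta> $ k = 0" unfolding Dv[OF \<zeta>] using k by simp
      qed
      have "(x - p) \<bullet>c w = z1 \<bullet>c \<zeta>" unfolding xp \<zeta>_def using cinner_adj[OF U z1 wc] .
      also have "\<dots> = (\<Sum>k<N. z1 $ k * cnj (\<zeta> $ k))" using cinner_sum[OF \<zeta>] .
      also have "\<dots> = 0" using dz unfolding z1_def by (intro sum.neutral) auto
      finally show ?thesis .
    qed
    have proj: "orth_proj (mat_kernel K) x = p"
      unfolding orth_proj_def
    proof (rule the_equality)
      show "p \<in> mat_kernel K \<and> (\<forall>w\<in>mat_kernel K. (x - p) \<bullet>c w = 0)" using pker orth by blast
    next
      fix q assume q: "q \<in> mat_kernel K \<and> (\<forall>w\<in>mat_kernel K. (x - q) \<bullet>c w = 0)"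
      have qc: "q \<in> carrier_vec N" and Kq: "K *\<^sub>v q = 0\<^sub>v N" using q K unfolding mat_kernel_def by auto
      have pc: "p \<in> carrier_vec N" and Kp: "K *\<^sub>v p = 0\<^sub>v N" using pker K unfolding mat_kernel_def by auto
      have rc: "p - q \<in> carrier_vec N" using pc qc by simp
      have "K *\<^sub>v (p - q) = 0\<^sub>v N" using mult_minus_distrib_mat_vec[OF K pc qc] Kp Kq by simp
      hence rk: "p - q \<in> mat_kernel K" using rc K unfolding mat_kernel_def by simp
      have e1: "(x - q) \<bullet>c (p - q) = 0" using q rk by blast
      have e2: "(x - p) \<bullet>c (p - q) = 0" using orth rk by blast
      have "(p - q) \<bullet>c (p - q) = ((x - q) - (x - p)) \<bullet>c (p - q)"
      proof -
        have "(x - q) - (x - p) = p - q" using x pc qc by (intro eq_vecI) auto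
        thus ?thesis by simp
      qed
      also have "\<dots> = (x - q) \<bullet>c (p - q) - (x - p) \<bullet>c (p - q)"
        using x pc qc rc by (simp add: minus_scalar_prod_distrib[of _ N])
      finally have "(p - q) \<bullet>c (p - q) = 0" using e1 e2 by simp
      hence "p - q = 0\<^sub>v N" using conjugate_square_eq_0_vec[OF rc] by simp
      show "q = p"
      proof (rule eq_vecI)
        fix i assume "i < dim_vec p"
        hence i: "i < N" using pc by simp
        have "(p - q) $ i = 0" using \<open>p - q = 0\<^sub>v N\<close> i by simp
        thus "q $ i = p $ i" using i pc qc by simp
      qed (use pc qc in simp)
    qed
    have nz: "(vnorm z)^2 = (vnorm z0)^2 + (vnorm z1)^2"
    proof -
      have "(vnorm z)^2 = (\<Sum>k<N. (cmod (z$k))^2)" using z by (simp add: vnorm_sq)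
      also have "\<dots> = (\<Sum>k<N. (if d k = 0 then (cmod (z$k))^2 else 0) + (if d k = 0 then 0 else (cmod (z$k))^2))"
        by (intro sum.cong) auto
      also have "\<dots> = (\<Sum>k<N. if d k = 0 then (cmod (z$k))^2 else 0) + (\<Sum>k<N. if d k = 0 then 0 else (cmod (z$k))^2)"
        by (rule sum.distrib)
      also have "(\<Sum>k<N. if d k = 0 then (cmod (z$k))^2 else 0) = (vnorm z0)^2"
        unfolding vnorm_sq z0_def by (intro sum.cong) auto
      also have "(\<Sum>k<N. if d k = 0 then 0 else (cmod (z$k))^2) = (vnorm z1)^2"
        unfolding vnorm_sq z1_def by (intro sum.cong) auto
      finally show ?thesis .
    qed
    have nK: "(spectral_gap K * vnorm z1)^2 \<le> (vnorm (D *\<^sub>v z))^2"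
    proof -
      have "(spectral_gap K * vnorm z1)^2 = (\<Sum>k<N. (spectral_gap K)^2 * (if d k = 0 then 0 else (cmod (z $ k))^2))"
        unfolding power_mult_distrib vnorm_sq z1_def by (simp add: sum_distrib_left) (intro sum.cong; simp)
      also have "\<dots> \<le> (\<Sum>k<N. (cmod (d k * z $ k))^2)"
      proof (rule sum_mono)
        fix k assume k: "k \<in> {..<N}"
        show "(spectral_gap K)^2 * (if d k = 0 then 0 else (cmod (z $ k))^2) \<le> (cmod (d k * z $ k))^2"
        proof (cases "d k = 0")
          case False
          have "(spectral_gap K)^2 \<le> (cmod (d k))^2"
            using gap_le[of k] k False gap_pos by (intro power_mono) auto
          thus ?thesis using False by (simp add: norm_mult power_mult_distrib mult_right_mono)
        qed simp
      qed
      also have "\<dots> = (vnorm (D *\<^sub>v z))^2" unfolding vnorm_sq Dv[OF z] by simp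
      finally show ?thesis .
    qed
    have "orth_proj (mat_kernel K) x \<in> carrier_vec N" using proj p by simp
    moreover have "(vnorm (orth_proj (mat_kernel K) x))^2 = (vnorm x)^2 - (vnorm (x - orth_proj (mat_kernel K) x))^2"
      unfolding proj xp using nz unfolding xz p_def unitary_vnorm[OF U UU z] unitary_vnorm[OF U UU z0]
        unitary_vnorm[OF U UU z1] by simp
    moreover have "spectral_gap K * vnorm (x - orth_proj (mat_kernel K) x) \<le> vnorm (K *\<^sub>v x)"
    proof -
      have "spectral_gap K * vnorm z1 \<le> vnorm (D *\<^sub>v z)"
        using nK by (rule power2_le_imp_le) (simp add: vnorm_nonneg)
      thus ?thesis unfolding proj xp using KUv[OF z] xz unitary_vnorm[OF U UU z1]
          unitary_vnorm[OF U UU] Dc z by simp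
    qed
    ultimately have "orth_proj (mat_kernel K) x \<in> carrier_vec N \<and>
      (vnorm (orth_proj (mat_kernel K) x))^2 = (vnorm x)^2 - (vnorm (x - orth_proj (mat_kernel K) x))^2 \<and>
      spectral_gap K * vnorm (x - orth_proj (mat_kernel K) x) \<le> vnorm (K *\<^sub>v x)" by blast
  }
  thus "\<And>x. x \<in> carrier_vec N \<Longrightarrow> orth_proj (mat_kernel K) x \<in> carrier_vec N"
   and "\<And>x. x \<in> carrier_vec N \<Longrightarrow> (vnorm (orth_proj (mat_kernel K) x))^2 = (vnorm x)^2 - (vnorm (x - orth_proj (mat_kernel K) x))^2"
   and "\<And>x. x \<in> carrier_vec N \<Longrightarrow> spectral_gap K * vnorm (x - orth_proj (mat_kernel K) x) \<le> vnorm (K *\<^sub>v x)"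
    by blast+
qed

definition sL1 :: "nat \<Rightarrow> complex vec \<Rightarrow> real" where
  "sL1 N v = (\<Sum>i<N. cmod (v $ i))"

definition mbound :: "nat \<Rightarrow> complex mat \<Rightarrow> real" where
  "mbound N H = (\<Sum>i<N. \<Sum>j<N. cmod (H $$ (i,j)))"

lemma mbound_nonneg: "mbound N H \<ge> 0"
  unfolding mbound_def by (intro sum_nonneg) auto

lemma sL1_nonneg: "sL1 N v \<ge> 0"
  unfolding sL1_def by (intro sum_nonneg) auto

lemma pow_Suc': fixes A :: "'a::semiring_1 mat"
  assumes A: "A \<in> carrier_mat n n" shows "A ^\<^sub>m Suc k = A * A ^\<^sub>m k"
proof (induction k)
  case 0
  then show ?case using A by simp
next
  case (Suc k)
  have "A ^\<^sub>m Suc (Suc k) = (A * A ^\<^sub>m k) * A" using Suc by simp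
  also have "\<dots> = A * (A ^\<^sub>m k * A)" using assoc_mult_mat[OF A pow_carrier_mat[OF A] A] .
  finally show ?case by simp
qed

lemma smult_pow: fixes A :: "complex mat"
  assumes A: "A \<in> carrier_mat n n" shows "(c \<cdot>\<^sub>m A) ^\<^sub>m k = (c ^ k) \<cdot>\<^sub>m (A ^\<^sub>m k)"
proof (induction k)
  case 0
  then show ?case using A by (auto intro!: eq_matI)
next
  case (Suc k)
  have "(c \<cdot>\<^sub>m A) ^\<^sub>m Suc k = ((c ^ k) \<cdot>\<^sub>m (A ^\<^sub>m k)) * (c \<cdot>\<^sub>m A)" using Suc by simp
  also have "\<dots> = (c ^ Suc k) \<cdot>\<^sub>m (A ^\<^sub>m Suc k)"
    using A by (intro eq_matI) (auto simp: scalar_prod_def sum_distrib_left mult_ac)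
  finally show ?case .
qed

lemma L1_bound:
  assumes H: "H \<in> carrier_mat N N" and v: "v \<in> carrier_vec N"
  shows "sL1 N (H *\<^sub>v v) \<le> mbound N H * sL1 N v"
proof -
  have "sL1 N (H *\<^sub>v v) = (\<Sum>i<N. cmod (\<Sum>j<N. H $$ (i,j) * v $ j))"
    unfolding sL1_def by (intro sum.cong refl) (simp only: mult_vec_sum[OF H v] lessThan_iff)
  also have "\<dots> \<le> (\<Sum>i<N. \<Sum>j<N. cmod (H $$ (i,j)) * sL1 N v)"
  proof (intro sum_mono)
    fix i assume "i \<in> {..<N}"
    have "cmod (\<Sum>j<N. H $$ (i,j) * v $ j) \<le> (\<Sum>j<N. cmod (H $$ (i,j) * v $ j))"
      by (rule norm_sum)
    also have "\<dots> \<le> (\<Sum>j<N. cmod (H $$ (i,j)) * sL1 N v)"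
    proof (intro sum_mono)
      fix j assume j: "j \<in> {..<N}"
      have "cmod (v $ j) \<le> sL1 N v" unfolding sL1_def
        using j by (intro member_le_sum) auto
      thus "cmod (H $$ (i,j) * v $ j) \<le> cmod (H $$ (i,j)) * sL1 N v"
        by (simp add: norm_mult mult_left_mono)
    qed
    finally show "cmod (\<Sum>j<N. H $$ (i,j) * v $ j) \<le> (\<Sum>j<N. cmod (H $$ (i,j)) * sL1 N v)" .
  qed
  also have "\<dots> = mbound N H * sL1 N v"
    unfolding mbound_def by (simp add: sum_distrib_right)
  finally show ?thesis .
qed

lemma pow_bound:
  assumes H: "H \<in> carrier_mat N N" and v: "v \<in> carrier_vec N"
  shows "sL1 N ((H ^\<^sub>m k) *\<^sub>v v) \<le> mbound N H ^ k * sL1 N v"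
proof (induction k)
  case 0
  then show ?case using v H by simp
next
  case (Suc k)
  have "(H ^\<^sub>m Suc k) *\<^sub>v v = H *\<^sub>v ((H ^\<^sub>m k) *\<^sub>v v)"
    unfolding pow_Suc'[OF H] using assoc_mult_mat_vec[OF H pow_carrier_mat[OF H] v] .
  hence "sL1 N ((H ^\<^sub>m Suc k) *\<^sub>v v) \<le> mbound N H * sL1 N ((H ^\<^sub>m k) *\<^sub>v v)"
    using L1_bound[OF H mult_mat_vec_carrier[OF pow_carrier_mat[OF H] v]] by simp
  also have "\<dots> \<le> mbound N H * (mbound N H ^ k * sL1 N v)"
    using Suc mbound_nonneg by (intro mult_left_mono) auto
  finally show ?case by (simp add: mult_ac)
qed

lemma entry_bound:
  assumes H: "H \<in> carrier_mat N N" and v: "v \<in> carrier_vec N" and i: "i < N"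
  shows "cmod (((H ^\<^sub>m k) *\<^sub>v v) $ i) \<le> mbound N H ^ k * sL1 N v"
proof -
  have "cmod (((H ^\<^sub>m k) *\<^sub>v v) $ i) \<le> sL1 N ((H ^\<^sub>m k) *\<^sub>v v)"
    unfolding sL1_def using i by (intro member_le_sum) auto
  thus ?thesis using pow_bound[OF H v, of k] by linarith
qed

lemma summable_expbound:
  fixes f :: "nat \<Rightarrow> complex"
  assumes "\<And>k. cmod (f k) \<le> C * B ^ k / fact k"
  shows "summable f"
proof (rule summable_comparison_test)
  show "\<exists>N. \<forall>n\<ge>N. norm (f n) \<le> C * (inverse (fact n) * B ^ n)"
    using assms by (auto simp: field_simps)
  show "summable (\<lambda>n. C * (inverse (fact n) * B ^ n))"
    by (intro summable_mult summable_exp)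
qed

definition co :: "complex mat \<Rightarrow> complex vec \<Rightarrow> nat \<Rightarrow> nat \<Rightarrow> complex" where
  "co H v i k = (- \<i>) ^ k * ((H ^\<^sub>m k) *\<^sub>v v) $ i / fact k"

definition gf :: "complex mat \<Rightarrow> complex vec \<Rightarrow> nat \<Rightarrow> complex \<Rightarrow> complex" where
  "gf H v i z = (\<Sum>k. co H v i k * z ^ k)"

lemma co_bound:
  assumes H: "H \<in> carrier_mat N N" and v: "v \<in> carrier_vec N" and i: "i < N"
  shows "cmod (co H v i k * z ^ k) \<le> sL1 N v * (mbound N H * cmod z) ^ k / fact k"
proof -
  have "cmod (co H v i k * z ^ k) = cmod (((H ^\<^sub>m k) *\<^sub>v v) $ i) * cmod z ^ k / fact k"
    unfolding co_def by (simp add: norm_mult norm_divide norm_power)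
  also have "\<dots> \<le> (mbound N H ^ k * sL1 N v) * cmod z ^ k / fact k"
    using entry_bound[OF H v i, of k] by (intro divide_right_mono mult_right_mono) auto
  finally show ?thesis by (simp add: power_mult_distrib mult_ac)
qed

lemma co_summable:
  assumes H: "H \<in> carrier_mat N N" and v: "v \<in> carrier_vec N" and i: "i < N"
  shows "summable (\<lambda>k. co H v i k * z ^ k)"
  by (rule summable_expbound[OF co_bound[OF H v i]])

lemma gf_deriv:
  assumes H: "H \<in> carrier_mat N N" and v: "v \<in> carrier_vec N" and i: "i < N"
  shows "(gf H v i has_field_derivative (- \<i> * (\<Sum>l<N. H $$ (i,l) * gf H v l z))) (at z)"
proof -
  have eq: "gf H v i = (\<lambda>z. \<Sum>k. co H v i k * z ^ k)" by (rule ext) (simp add: gf_def)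
  have d: "(gf H v i has_field_derivative (\<Sum>k. diffs (co H v i) k * z ^ k)) (at z)"
    unfolding eq by (rule termdiffs_strong_converges_everywhere) (rule co_summable[OF H v i])
  have trm: "diffs (co H v i) k * z ^ k = - \<i> * (\<Sum>l<N. H $$ (i,l) * (co H v l k * z ^ k))" for k
  proof -
    have hv: "(H ^\<^sub>m k) *\<^sub>v v \<in> carrier_vec N" using mult_mat_vec_carrier[OF pow_carrier_mat[OF H] v] .
    have "((H ^\<^sub>m Suc k) *\<^sub>v v) $ i = (H *\<^sub>v ((H ^\<^sub>m k) *\<^sub>v v)) $ i"
      unfolding pow_Suc'[OF H] using assoc_mult_mat_vec[OF H pow_carrier_mat[OF H] v] by simp
    also have "\<dots> = (\<Sum>l<N. H $$ (i,l) * ((H ^\<^sub>m k) *\<^sub>v v) $ l)"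
      using mult_vec_sum[OF H hv i] .
    finally have e: "((H ^\<^sub>m Suc k) *\<^sub>v v) $ i = (\<Sum>l<N. H $$ (i,l) * ((H ^\<^sub>m k) *\<^sub>v v) $ l)" .
    have "diffs (co H v i) k = of_nat (Suc k) * ((- \<i>) ^ Suc k * ((H ^\<^sub>m Suc k) *\<^sub>v v) $ i / fact (Suc k))"
      unfolding diffs_def co_def ..
    also have "\<dots> = (- \<i>) ^ Suc k * ((H ^\<^sub>m Suc k) *\<^sub>v v) $ i / fact k"
      by (simp add: field_simps del: of_nat_Suc)
    finally show ?thesis unfolding e co_def
      by (simp add: sum_distrib_left sum_divide_distrib mult_ac)
  qed
  have "(\<Sum>k. diffs (co H v i) k * z ^ k) = (\<Sum>k. - \<i> * (\<Sum>l<N. H $$ (i,l) * (co H v l k * z ^ k)))"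
    unfolding trm ..
  also have "\<dots> = - \<i> * (\<Sum>k. (\<Sum>l<N. H $$ (i,l) * (co H v l k * z ^ k)))"
    by (rule suminf_mult) (intro summable_sum summable_mult co_summable[OF H v]; simp)
  also have "(\<Sum>k. (\<Sum>l<N. H $$ (i,l) * (co H v l k * z ^ k))) = (\<Sum>l<N. \<Sum>k. H $$ (i,l) * (co H v l k * z ^ k))"
    by (rule suminf_sum) (intro summable_mult co_summable[OF H v]; simp)
  also have "\<dots> = (\<Sum>l<N. H $$ (i,l) * gf H v l z)"
    unfolding gf_def by (intro sum.cong refl suminf_mult co_summable[OF H v]) simp
  finally show ?thesis using d by simp
qed

lemma unit_entry: fixes A :: "complex mat" assumes A: "A \<in> carrier_mat n n" and i: "i < n" and j: "j < n"
  shows "(A *\<^sub>v unit_vec n j) $ i = A $$ (i,j)"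
proof -
  have "(A *\<^sub>v unit_vec n j) $ i = (\<Sum>l<n. A $$ (i,l) * unit_vec n j $ l)"
    by (rule mult_vec_sum[OF A _ i]) simp
  also have "\<dots> = (\<Sum>l<n. if l = j then A $$ (i,j) else 0)"
    by (intro sum.cong) (auto simp: unit_vec_def)
  also have "\<dots> = A $$ (i,j)" using j by simp
  finally show ?thesis .
qed

lemma sL1_unit: "j < n \<Longrightarrow> sL1 n (unit_vec n j) = 1"
  unfolding sL1_def unit_vec_def by (simp add: if_distrib cong: if_cong)

lemma mexp_apply:
  assumes H: "H \<in> carrier_mat N N" and v: "v \<in> carrier_vec N" and i: "i < N"
  shows "(mexp ((- \<i> * complex_of_real t) \<cdot>\<^sub>m H) *\<^sub>v v) $ i = gf H v i (complex_of_real t)"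
proof -
  define c where "c = - \<i> * complex_of_real t"
  have Mc: "mexp (c \<cdot>\<^sub>m H) \<in> carrier_mat N N" using H unfolding mexp_def by simp
  have entry: "mexp (c \<cdot>\<^sub>m H) $$ (i,j) = (\<Sum>k. c ^ k * (H ^\<^sub>m k) $$ (i,j) / fact k)" if j: "j < N" for j
    unfolding mexp_def using H i j by (simp add: smult_pow[OF H])
  have summ: "summable (\<lambda>k. c ^ k * (H ^\<^sub>m k) $$ (i,j) / fact k)" if j: "j < N" for j
  proof (rule summable_expbound)
    fix k
    have "cmod ((H ^\<^sub>m k) $$ (i,j)) \<le> mbound N H ^ k * sL1 N (unit_vec N j)"
      using entry_bound[OF H _ i, of "unit_vec N j" k] unit_entry[OF pow_carrier_mat[OF H] i j] by simp
    hence "cmod ((H ^\<^sub>m k) $$ (i,j)) \<le> mbound N H ^ k" using sL1_unit[OF j] by simp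
    hence "cmod (c ^ k * (H ^\<^sub>m k) $$ (i,j) / fact k) \<le> cmod c ^ k * mbound N H ^ k / fact k"
      by (simp add: norm_mult norm_divide norm_power divide_right_mono mult_left_mono)
    thus "cmod (c ^ k * (H ^\<^sub>m k) $$ (i,j) / fact k) \<le> 1 * (cmod c * mbound N H) ^ k / fact k"
      by (simp add: power_mult_distrib)
  qed
  have "(mexp (c \<cdot>\<^sub>m H) *\<^sub>v v) $ i = (\<Sum>j<N. mexp (c \<cdot>\<^sub>m H) $$ (i,j) * v $ j)"
    using mult_vec_sum[OF Mc v i] .
  also have "\<dots> = (\<Sum>j<N. \<Sum>k. c ^ k * (H ^\<^sub>m k) $$ (i,j) / fact k * v $ j)"
    by (intro sum.cong refl) (simp add: entry suminf_mult2[OF summ])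
  also have "\<dots> = (\<Sum>k. \<Sum>j<N. c ^ k * (H ^\<^sub>m k) $$ (i,j) / fact k * v $ j)"
    by (rule suminf_sum[symmetric]) (intro summable_mult2 summ; simp)
  also have "\<dots> = (\<Sum>k. co H v i k * complex_of_real t ^ k)"
  proof (rule arg_cong[where f=suminf], rule ext)
    fix k
    have "((H ^\<^sub>m k) *\<^sub>v v) $ i = (\<Sum>j<N. (H ^\<^sub>m k) $$ (i,j) * v $ j)"
      using mult_vec_sum[OF pow_carrier_mat[OF H] v i] .
    moreover have "c ^ k = (- \<i>) ^ k * complex_of_real t ^ k" unfolding c_def by (rule power_mult_distrib)
    ultimately show "(\<Sum>j<N. c ^ k * (H ^\<^sub>m k) $$ (i,j) / fact k * v $ j) = co H v i k * complex_of_real t ^ k"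
      unfolding co_def by (simp add: sum_distrib_left sum_divide_distrib mult_ac)
  qed
  finally show ?thesis unfolding c_def gf_def .
qed

lemma CS_real:
  fixes a b :: "nat \<Rightarrow> real"
  assumes fin: "finite I"
  shows "(\<Sum>i\<in>I. a i * b i) \<le> sqrt (\<Sum>i\<in>I. (a i)^2) * sqrt (\<Sum>i\<in>I. (b i)^2)"
proof -
  define A where "A = sqrt (\<Sum>i\<in>I. (a i)^2)"
  define B where "B = sqrt (\<Sum>i\<in>I. (b i)^2)"
  have A2: "A^2 = (\<Sum>i\<in>I. (a i)^2)" unfolding A_def by (simp add: sum_nonneg)
  have B2: "B^2 = (\<Sum>i\<in>I. (b i)^2)" unfolding B_def by (simp add: sum_nonneg)
  show ?thesis
  proof (cases "A = 0 \<or> B = 0")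
    case True
    then show ?thesis
    proof
      assume "A = 0"
      hence "\<forall>i\<in>I. (a i)^2 = 0" using A2 fin by (simp add: sum_nonneg_eq_0_iff)
      thus ?thesis unfolding A_def[symmetric] B_def[symmetric] using \<open>A = 0\<close> by simp
    next
      assume "B = 0"
      hence "\<forall>i\<in>I. (b i)^2 = 0" using B2 fin by (simp add: sum_nonneg_eq_0_iff)
      thus ?thesis unfolding A_def[symmetric] B_def[symmetric] using \<open>B = 0\<close> by simp
    qed
  next
    case False
    have s1: "(\<Sum>i\<in>I. (a i)^2) \<ge> 0" "(\<Sum>i\<in>I. (b i)^2) \<ge> 0" by (auto intro: sum_nonneg)
    have Ap: "A > 0" and Bp: "B > 0" using False s1 unfolding A_def B_def by auto
    have "(\<Sum>i\<in>I. a i * b i) \<le> (\<Sum>i\<in>I. (A * B / 2) * ((a i)^2 / A^2 + (b i)^2 / B^2))"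
    proof (rule sum_mono)
      fix i assume "i \<in> I"
      have "0 \<le> (a i * B - b i * A)^2" by simp
      hence "2 * (a i * b i) * (A * B) \<le> (a i)^2 * B^2 + (b i)^2 * A^2"
        by (simp add: power2_eq_square algebra_simps)
      hence h: "2 * (a i * b i) * (A * B) / (2 * A * B) \<le> ((a i)^2 * B^2 + (b i)^2 * A^2) / (2 * A * B)"
        using Ap Bp by (intro divide_right_mono) auto
      have e1: "2 * (a i * b i) * (A * B) / (2 * A * B) = a i * b i" using Ap Bp by simp
      have e2: "((a i)^2 * B^2 + (b i)^2 * A^2) / (2 * A * B) = (A * B / 2) * ((a i)^2 / A^2 + (b i)^2 / B^2)"
        using Ap Bp by (simp add: field_simps power2_eq_square)
      show "a i * b i \<le> (A * B / 2) * ((a i)^2 / A^2 + (b i)^2 / B^2)" using h unfolding e1 e2 .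
    qed
    also have "\<dots> = (A * B / 2) * ((\<Sum>i\<in>I. (a i)^2) / A^2 + (\<Sum>i\<in>I. (b i)^2) / B^2)"
      by (simp add: sum_distrib_left sum.distrib sum_divide_distrib distrib_left)
    also have "\<dots> = A * B" unfolding A2[symmetric] B2[symmetric] using Ap Bp by simp
    finally show ?thesis unfolding A_def B_def .
  qed
qed

lemma CS_complex:
  fixes a b :: "nat \<Rightarrow> complex"
  shows "cmod (\<Sum>i<N. cnj (a i) * b i) \<le> sqrt (\<Sum>i<N. (cmod (a i))^2) * sqrt (\<Sum>i<N. (cmod (b i))^2)"
proof -
  have "cmod (\<Sum>i<N. cnj (a i) * b i) \<le> (\<Sum>i<N. cmod (a i) * cmod (b i))"
    by (rule order_trans[OF norm_sum]) (simp add: norm_mult)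
  also have "\<dots> \<le> sqrt (\<Sum>i<N. (cmod (a i))^2) * sqrt (\<Sum>i<N. (cmod (b i))^2)"
    by (rule CS_real) simp
  finally show ?thesis .
qed

lemma herm_form_real:
  fixes H :: "complex mat"
  assumes H: "H \<in> carrier_mat N N" and Hh: "mat_adjoint H = H"
  shows "Im (\<Sum>i<N. cnj (a i) * (\<Sum>l<N. H $$ (i,l) * a l)) = 0"
proof -
  define Q where "Q = (\<Sum>i<N. cnj (a i) * (\<Sum>l<N. H $$ (i,l) * a l))"
  have Hc: "cnj (H $$ (i,l)) = H $$ (l,i)" if "i < N" "l < N" for i l
  proof -
    have "mat_adjoint H $$ (l,i) = cnj (H $$ (i,l))" using H that by simp
    thus ?thesis using Hh by simp
  qed
  have "cnj Q = (\<Sum>i<N. \<Sum>l<N. a i * H $$ (l,i) * cnj (a l))"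
    unfolding Q_def by (simp add: sum_distrib_left mult_ac) (auto intro!: sum.cong simp: Hc)
  also have "\<dots> = (\<Sum>l<N. \<Sum>i<N. a i * H $$ (l,i) * cnj (a l))" by (rule sum.swap)
  also have "\<dots> = Q" unfolding Q_def by (simp add: sum_distrib_left mult_ac)
  finally have "cnj Q = Q" .
  hence "Im Q = 0" by (metis Reals_cnj_iff complex_is_Real_iff)
  thus ?thesis unfolding Q_def .
qed

lemma opnorm_le:
  fixes A :: "complex mat"
  assumes A: "A \<in> carrier_mat N N" and v: "v \<in> carrier_vec N" and v1: "vnorm v \<le> 1"
  shows "vnorm (A *\<^sub>v v) \<le> opnorm A"
proof -
  define B where "B = sqrt (\<Sum>i<N. (\<Sum>j<N. cmod (A $$ (i,j)))^2)"
  have bd: "vnorm (A *\<^sub>v w) \<le> B" if w: "w \<in> carrier_vec N" "vnorm w \<le> 1" for w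
  proof -
    have wj: "cmod (w $ j) \<le> 1" if "j < N" for j
    proof -
      have "(cmod (w $ j))^2 \<le> (\<Sum>k<N. (cmod (w $ k))^2)"
        using that by (intro member_le_sum) auto
      also have "\<dots> = (vnorm w)^2" using w by (simp add: vnorm_sq)
      also have "\<dots> \<le> 1" using w vnorm_nonneg by (simp add: power_le_one)
      finally show ?thesis by (simp add: power_le_one_iff)
    qed
    have ent: "cmod ((A *\<^sub>v w) $ i) \<le> (\<Sum>j<N. cmod (A $$ (i,j)))" if i: "i < N" for i
    proof -
      have "cmod ((A *\<^sub>v w) $ i) = cmod (\<Sum>j<N. A $$ (i,j) * w $ j)" using mult_vec_sum[OF A w(1) i] by simp
      also have "\<dots> \<le> (\<Sum>j<N. cmod (A $$ (i,j) * w $ j))" by (rule norm_sum)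
      also have "\<dots> \<le> (\<Sum>j<N. cmod (A $$ (i,j)))"
        by (intro sum_mono) (use wj in \<open>auto simp: norm_mult intro: mult_left_le\<close>)
      finally show ?thesis .
    qed
    have "(vnorm (A *\<^sub>v w))^2 = (\<Sum>i<N. (cmod ((A *\<^sub>v w) $ i))^2)" using A by (simp add: vnorm_sq)
    also have "\<dots> \<le> (\<Sum>i<N. (\<Sum>j<N. cmod (A $$ (i,j)))^2)"
      by (intro sum_mono power_mono ent) auto
    finally have "(vnorm (A *\<^sub>v w))^2 \<le> B^2" unfolding B_def by (simp add: sum_nonneg)
    thus ?thesis unfolding B_def by (rule power2_le_imp_le) (intro real_sqrt_ge_zero sum_nonneg; simp)
  qed
  have "vnorm (A *\<^sub>v v) \<le> Sup {vnorm (A *\<^sub>v v) | v. v \<in> carrier_vec (dim_col A) \<and> vnorm v \<le> 1}"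
    using A v v1 bd by (intro cSup_upper) (auto intro!: bdd_aboveI[of _ B])
  thus ?thesis unfolding opnorm_def .
qed

lemma deriv_normsq:
  fixes f f' :: "nat \<Rightarrow> real \<Rightarrow> complex"
  assumes d: "\<And>i. i < N \<Longrightarrow> (f i has_vector_derivative f' i t) (at t)"
  shows "((\<lambda>s. \<Sum>i<N. (cmod (f i s))^2) has_real_derivative
           (2 * Re (\<Sum>i<N. cnj (f i t) * f' i t))) (at t)"
proof -
  have one: "((\<lambda>s. (cmod (f i s))^2) has_real_derivative
           2 * (Re (f i t) * Re (f' i t) + Im (f i t) * Im (f' i t))) (at t)" if i: "i < N" for i
  proof -
    have r: "((\<lambda>s. Re (f i s)) has_real_derivative Re (f' i t)) (at t)"
      using has_field_derivative_Re[OF d[OF i]] .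
    have m: "((\<lambda>s. Im (f i s)) has_real_derivative Im (f' i t)) (at t)"
      using has_field_derivative_Im[OF d[OF i]] .
    have "((\<lambda>s. (Re (f i s))^2 + (Im (f i s))^2) has_real_derivative
           2 * (Re (f i t) * Re (f' i t) + Im (f i t) * Im (f' i t))) (at t)"
      by (rule derivative_eq_intros r m refl | simp add: algebra_simps)+
    thus ?thesis unfolding cmod_power2 .
  qed
  have "((\<lambda>s. \<Sum>i<N. (cmod (f i s))^2) has_real_derivative
           (\<Sum>i<N. 2 * (Re (f i t) * Re (f' i t) + Im (f i t) * Im (f' i t)))) (at t)"
    by (rule DERIV_sum) (use one in auto)
  moreover have "(\<Sum>i<N. 2 * (Re (f i t) * Re (f' i t) + Im (f i t) * Im (f' i t))) =
      2 * Re (\<Sum>i<N. cnj (f i t) * f' i t)"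
    by (simp add: Re_sum sum_distrib_left)
  ultimately show ?thesis by simp
qed

lemma ode_cmp:
  fixes G G' :: "real \<Rightarrow> real"
  assumes d: "\<And>s. (G has_real_derivative G' s) (at s)"
    and b: "\<And>s. \<bar>G' s\<bar> \<le> 2 * e * sqrt (G s)"
    and nn: "\<And>s. G s \<ge> 0" and G0: "G 0 = 0" and e: "e \<ge> 0"
  shows "G t \<le> e^2 * t^2"
proof -
  have key: "G t \<le> e^2 * t^2 + 2 * e * \<bar>t\<bar> * sqrt \<delta>" if dp: "\<delta> > 0" for \<delta>
  proof -
    define h where "h = (\<lambda>s. sqrt (G s + \<delta>))"
    define h' where "h' = (\<lambda>s. inverse (sqrt (G s + \<delta>)) / 2 * G' s)"
    have hd: "(h has_real_derivative h' s) (at s)" for s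
    proof -
      have pos: "G s + \<delta> > 0" using nn[of s] dp by simp
      have "((\<lambda>s. G s + \<delta>) has_real_derivative G' s) (at s)"
        using d[of s] by (auto intro!: derivative_eq_intros)
      from DERIV_chain2[OF DERIV_real_sqrt[OF pos] this]
      show ?thesis unfolding h_def h'_def .
    qed
    have hb: "\<bar>h' s\<bar> \<le> e" for s
    proof -
      have pos: "sqrt (G s + \<delta>) > 0" using nn[of s] dp by simp
      have "sqrt (G s) \<le> sqrt (G s + \<delta>)" using dp by simp
      hence "\<bar>G' s\<bar> \<le> 2 * e * sqrt (G s + \<delta>)" using b[of s] e
        by (meson mult_left_mono order_trans zero_le_mult_iff zero_le_numeral)
      hence "\<bar>G' s\<bar> / (2 * sqrt (G s + \<delta>)) \<le> e" using pos by (simp add: field_simps)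
      moreover have "\<bar>h' s\<bar> = \<bar>G' s\<bar> / (2 * sqrt (G s + \<delta>))"
        unfolding h'_def using pos by (simp add: abs_mult field_simps)
      ultimately show ?thesis by simp
    qed
    have h0: "h 0 = sqrt \<delta>" unfolding h_def G0 by simp
    have ht: "h t \<le> sqrt \<delta> + e * \<bar>t\<bar>"
    proof (cases "t \<ge> 0")
      case True
      have "(\<lambda>s. h s - e * s) t \<le> (\<lambda>s. h s - e * s) 0"
      proof (rule DERIV_nonpos_imp_nonincreasing[OF True])
        fix x show "\<exists>y. ((\<lambda>s. h s - e * s) has_real_derivative y) (at x) \<and> y \<le> 0"
          using hd[of x] hb[of x] by (intro exI[of _ "h' x - e"]) (auto intro!: derivative_eq_intros)
      qed
      thus ?thesis using h0 True by simp
    next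
      case False
      hence tl: "t \<le> 0" by simp
      have "(\<lambda>s. h s + e * s) t \<le> (\<lambda>s. h s + e * s) 0"
      proof (rule DERIV_nonneg_imp_nondecreasing[OF tl])
        fix x show "\<exists>y. ((\<lambda>s. h s + e * s) has_real_derivative y) (at x) \<and> y \<ge> 0"
          using hd[of x] hb[of x] by (intro exI[of _ "h' x + e"]) (auto intro!: derivative_eq_intros)
      qed
      thus ?thesis using h0 False by simp
    qed
    have "G t + \<delta> = (h t)^2" unfolding h_def using nn[of t] dp by simp
    also have "\<dots> \<le> (sqrt \<delta> + e * \<bar>t\<bar>)^2"
      using ht nn[of t] dp by (intro power_mono) (auto simp: h_def)
    also have "\<dots> = \<delta> + 2 * e * \<bar>t\<bar> * sqrt \<delta> + e^2 * t^2"
      using dp by (simp add: power2_eq_square algebra_simps)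
    finally show ?thesis by simp
  qed
  show ?thesis
  proof (rule ccontr)
    assume na: "\<not> G t \<le> e^2 * t^2"
    define \<eta> where "\<eta> = G t - e^2 * t^2"
    have \<eta>: "\<eta> > 0" using na unfolding \<eta>_def by simp
    define c where "c = 2 * e * \<bar>t\<bar>"
    have c: "c \<ge> 0" unfolding c_def using e by simp
    define \<delta> where "\<delta> = (\<eta> / (c + 1))^2"
    have dp: "\<delta> > 0" unfolding \<delta>_def using \<eta> c by simp
    have "sqrt \<delta> = \<eta> / (c + 1)" unfolding \<delta>_def using \<eta> c by simp
    hence "sqrt \<delta> + c * sqrt \<delta> = \<eta>" using \<eta> c by (simp add: field_simps)
    moreover have "sqrt \<delta> > 0" using dp by simp
    ultimately have "c * sqrt \<delta> < \<eta>" by linarith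
    thus False using key[OF dp] unfolding \<eta>_def c_def by simp
  qed
qed

lemma dynamics:
  fixes H K :: "complex mat" and psi :: "complex vec" and \<epsilon> t :: real
  assumes H: "H \<in> carrier_mat N N" and Hh: "mat_adjoint H = H"
    and K: "K \<in> carrier_mat N N"
    and Cb: "opnorm (H * K - K * H) \<le> \<epsilon>" and e: "\<epsilon> \<ge> 0"
    and psi: "psi \<in> carrier_vec N" and Kpsi: "K *\<^sub>v psi = 0\<^sub>v N" and n1: "vnorm psi = 1"
  shows "vnorm (mexp ((- \<i> * complex_of_real t) \<cdot>\<^sub>m H) *\<^sub>v psi) = 1"
    and "vnorm (K *\<^sub>v (mexp ((- \<i> * complex_of_real t) \<cdot>\<^sub>m H) *\<^sub>v psi)) \<le> \<epsilon> * \<bar>t\<bar>"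
proof -
  define y where "y = (\<lambda>i s. gf H psi i (complex_of_real s))"
  define Y where "Y = (\<lambda>s. vec N (\<lambda>i. y i s))"
  have Yc: "Y s \<in> carrier_vec N" for s unfolding Y_def by simp
  have mexpY: "mexp ((- \<i> * complex_of_real s) \<cdot>\<^sub>m H) *\<^sub>v psi = Y s" for s
  proof (rule eq_vecI)
    have Mc: "mexp ((- \<i> * complex_of_real s) \<cdot>\<^sub>m H) \<in> carrier_mat N N" using H unfolding mexp_def by simp
    show "dim_vec (mexp ((- \<i> * complex_of_real s) \<cdot>\<^sub>m H) *\<^sub>v psi) = dim_vec (Y s)"
      using Mc unfolding Y_def by simp
    fix i assume "i < dim_vec (Y s)"
    hence i: "i < N" unfolding Y_def by simp
    show "(mexp ((- \<i> * complex_of_real s) \<cdot>\<^sub>m H) *\<^sub>v psi) $ i = Y s $ i"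
      unfolding mexp_apply[OF H psi i] Y_def y_def using i by simp
  qed
  have yd: "(y i has_vector_derivative (- \<i> * (\<Sum>l<N. H $$ (i,l) * y l s))) (at s)" if i: "i < N" for i s
    unfolding y_def using has_vector_derivative_real_field[OF gf_deriv[OF H psi i]] .
  have HY: "(H *\<^sub>v Y s) $ i = (\<Sum>l<N. H $$ (i,l) * y l s)" if i: "i < N" for i s
    using mult_vec_sum[OF H Yc i] unfolding Y_def by simp
  have Y0: "Y 0 = psi"
  proof (rule eq_vecI)
    fix i assume "i < dim_vec psi"
    hence i: "i < N" using psi by simp
    have "y i 0 = co H psi i 0" unfolding y_def gf_def by simp
    also have "\<dots> = psi $ i" unfolding co_def using psi i H by simp
    finally show "Y 0 $ i = psi $ i" unfolding Y_def using i by simp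
  qed (use psi in \<open>simp add: Y_def\<close>)
  define n where "n = (\<lambda>s. \<Sum>i<N. (cmod (y i s))^2)"
  have nY: "n s = (vnorm (Y s))^2" for s unfolding n_def vnorm_sq Y_def by simp
  have nd: "(n has_real_derivative 0) (at s)" for s
  proof -
    have "(n has_real_derivative (2 * Re (\<Sum>i<N. cnj (y i s) * (- \<i> * (\<Sum>l<N. H $$ (i,l) * y l s))))) (at s)"
      unfolding n_def by (rule deriv_normsq) (rule yd)
    moreover have "Re (\<Sum>i<N. cnj (y i s) * (- \<i> * (\<Sum>l<N. H $$ (i,l) * y l s))) = 0"
    proof -
      have "(\<Sum>i<N. cnj (y i s) * (- \<i> * (\<Sum>l<N. H $$ (i,l) * y l s)))
          = - \<i> * (\<Sum>i<N. cnj (y i s) * (\<Sum>l<N. H $$ (i,l) * y l s))"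
        by (simp add: sum_distrib_left mult_ac)
      moreover have "Im (\<Sum>i<N. cnj (y i s) * (\<Sum>l<N. H $$ (i,l) * y l s)) = 0"
        by (rule herm_form_real[OF H Hh])
      ultimately show ?thesis by simp
    qed
    ultimately show ?thesis by simp
  qed
  have nconst: "n s = 1" for s
  proof -
    have "n s = n 0" using DERIV_isconst_all[of n s 0] nd by blast
    also have "\<dots> = 1" unfolding nY Y0 n1 by simp
    finally show ?thesis .
  qed
  have Y1: "vnorm (Y s) = 1" for s
  proof -
    have "(vnorm (Y s))^2 = 1" using nconst[of s] nY[of s] by simp
    hence "vnorm (Y s) = 1 \<or> vnorm (Y s) = -1" by (simp add: power2_eq_1_iff)
    thus ?thesis using vnorm_nonneg[of "Y s"] by auto
  qed
  show "vnorm (mexp ((- \<i> * complex_of_real t) \<cdot>\<^sub>m H) *\<^sub>v psi) = 1" unfolding mexpY by (rule Y1)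
  define C where "C = H * K - K * H"
  have Cc: "C \<in> carrier_mat N N" unfolding C_def using minus_carrier_mat[OF mult_carrier_mat[OF K H]] .
  define f where "f = (\<lambda>i s. \<Sum>j<N. K $$ (i,j) * y j s)"
  define f' where "f' = (\<lambda>i s. \<Sum>j<N. K $$ (i,j) * (- \<i> * (\<Sum>l<N. H $$ (j,l) * y l s)))"
  have fK: "f i s = (K *\<^sub>v Y s) $ i" if i: "i < N" for i s
    using mult_vec_sum[OF K Yc i] unfolding f_def Y_def by simp
  have fd: "(f i has_vector_derivative f' i s) (at s)" if i: "i < N" for i s
    unfolding f_def f'_def by (intro has_vector_derivative_sum has_vector_derivative_mult_right yd) simp
  define F where "F = (\<lambda>s. \<Sum>i<N. (cmod (f i s))^2)"
  define F' where "F' = (\<lambda>s. 2 * Re (\<Sum>i<N. cnj (f i s) * f' i s))"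
  have FY: "F s = (vnorm (K *\<^sub>v Y s))^2" for s
    unfolding F_def vnorm_sq using K fK by simp
  have Fd: "(F has_real_derivative F' s) (at s)" for s
    unfolding F_def F'_def by (rule deriv_normsq) (rule fd)
  have Fnn: "F s \<ge> 0" for s unfolding F_def by (intro sum_nonneg) simp
  have F0: "F 0 = 0" unfolding FY Y0 Kpsi by (simp add: vnorm_def)
  have Fb: "\<bar>F' s\<bar> \<le> 2 * \<epsilon> * sqrt (F s)" for s
  proof -
    define fv where "fv = K *\<^sub>v Y s"
    have fvc: "fv \<in> carrier_vec N" unfolding fv_def using K Yc by simp
    have f'eq: "f' i s = - \<i> * ((H *\<^sub>v fv) $ i - (C *\<^sub>v Y s) $ i)" if i: "i < N" for i
    proof -
      have "f' i s = (\<Sum>j<N. K $$ (i,j) * (- \<i> * (H *\<^sub>v Y s) $ j))"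
        unfolding f'_def by (intro sum.cong refl) (simp add: HY)
      also have "\<dots> = - \<i> * (\<Sum>j<N. K $$ (i,j) * (H *\<^sub>v Y s) $ j)"
        by (simp add: sum_distrib_left mult_ac)
      also have "(\<Sum>j<N. K $$ (i,j) * (H *\<^sub>v Y s) $ j) = (K *\<^sub>v (H *\<^sub>v Y s)) $ i"
        using mult_vec_sum[OF K _ i, of "H *\<^sub>v Y s"] H Yc by simp
      also have "K *\<^sub>v (H *\<^sub>v Y s) = (K * H) *\<^sub>v Y s" using assoc_mult_mat_vec[OF K H Yc] by simp
      also have "K * H = H * K - C" unfolding C_def using H K by (intro eq_matI) auto
      also have "(H * K - C) *\<^sub>v Y s = H *\<^sub>v fv - C *\<^sub>v Y s"
      proof -
        have "(H * K - C) *\<^sub>v Y s = (H * K) *\<^sub>v Y s - C *\<^sub>v Y s"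
          using minus_mult_distrib_mat_vec[of "H * K" N N C "Y s"] H K Cc Yc by simp
        also have "(H * K) *\<^sub>v Y s = H *\<^sub>v fv" unfolding fv_def using assoc_mult_mat_vec[OF H K Yc] by simp
        finally show ?thesis .
      qed
      finally show ?thesis using i H Cc fvc Yc by simp
    qed
    have Hfv: "(H *\<^sub>v fv) $ i = (\<Sum>l<N. H $$ (i,l) * fv $ l)" if i: "i < N" for i
      using mult_vec_sum[OF H fvc i] .
    have ffv: "f i s = fv $ i" if "i < N" for i using fK[OF that] unfolding fv_def .
    define Q1 where "Q1 = (\<Sum>i<N. cnj (fv $ i) * (\<Sum>l<N. H $$ (i,l) * fv $ l))"
    define Q2 where "Q2 = (\<Sum>i<N. cnj (fv $ i) * (C *\<^sub>v Y s) $ i)"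
    have "(\<Sum>i<N. cnj (f i s) * f' i s) = (\<Sum>i<N. - \<i> * (cnj (fv $ i) * (\<Sum>l<N. H $$ (i,l) * fv $ l)) + \<i> * (cnj (fv $ i) * (C *\<^sub>v Y s) $ i))"
      by (intro sum.cong refl) (simp add: ffv f'eq Hfv algebra_simps)
    also have "\<dots> = - \<i> * Q1 + \<i> * Q2"
      unfolding Q1_def Q2_def by (simp add: sum.distrib sum_distrib_left)
    finally have eq: "(\<Sum>i<N. cnj (f i s) * f' i s) = - \<i> * Q1 + \<i> * Q2" .
    have Q1r: "Im Q1 = 0" unfolding Q1_def by (rule herm_form_real[OF H Hh])
    have "F' s = 2 * Re (\<i> * Q2)" unfolding F'_def eq using Q1r by simp
    hence "\<bar>F' s\<bar> \<le> 2 * cmod Q2" using abs_Re_le_cmod[of "\<i> * Q2"] by (simp add: norm_mult)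
    also have "cmod Q2 \<le> sqrt (\<Sum>i<N. (cmod (fv $ i))^2) * sqrt (\<Sum>i<N. (cmod ((C *\<^sub>v Y s) $ i))^2)"
      unfolding Q2_def by (rule CS_complex)
    also have "sqrt (\<Sum>i<N. (cmod (fv $ i))^2) = sqrt (F s)"
      unfolding F_def using ffv by simp
    also have "sqrt (\<Sum>i<N. (cmod ((C *\<^sub>v Y s) $ i))^2) = vnorm (C *\<^sub>v Y s)"
      unfolding vnorm_def using Cc by simp
    also have "vnorm (C *\<^sub>v Y s) \<le> \<epsilon>"
      using opnorm_le[OF Cc Yc[of s]] Y1[of s] Cb unfolding C_def by simp
    finally have "\<bar>F' s\<bar> \<le> 2 * (sqrt (F s) * \<epsilon>)" using Fnn[of s] by (simp add: mult_left_mono)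
    thus ?thesis by (simp add: mult_ac)
  qed
  have "F t \<le> \<epsilon>^2 * t^2" by (rule ode_cmp[OF Fd Fb Fnn F0 e])
  hence "(vnorm (K *\<^sub>v Y t))^2 \<le> (\<epsilon> * \<bar>t\<bar>)^2" unfolding FY by (simp add: power_mult_distrib)
  hence "vnorm (K *\<^sub>v Y t) \<le> \<epsilon> * \<bar>t\<bar>" by (rule power2_le_imp_le) (use e in simp)
  thus "vnorm (K *\<^sub>v (mexp ((- \<i> * complex_of_real t) \<cdot>\<^sub>m H) *\<^sub>v psi)) \<le> \<epsilon> * \<bar>t\<bar>" unfolding mexpY .
qed

lemma kron_carrier: "A \<in> carrier_mat p p \<Longrightarrow> B \<in> carrier_mat q q \<Longrightarrow> kron A B \<in> carrier_mat (p*q) (p*q)"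
  unfolding kron_def by auto

lemma kron_adj:
  assumes A: "A \<in> carrier_mat p p" and B: "B \<in> carrier_mat q q"
  shows "mat_adjoint (kron A B) = kron (mat_adjoint A) (mat_adjoint B)"
proof (rule eq_matI)
  fix i j assume "i < dim_row (kron (mat_adjoint A) (mat_adjoint B))" "j < dim_col (kron (mat_adjoint A) (mat_adjoint B))"
  hence i: "i < p * q" and j: "j < p * q" using A B unfolding kron_def by auto
  have q: "q > 0" using i by (cases q) auto
  have id: "i div q < p" "j div q < p" using i j q by (auto simp: less_mult_imp_div_less mult.commute)
  have im: "i mod q < q" "j mod q < q" using q by auto
  show "mat_adjoint (kron A B) $$ (i, j) = kron (mat_adjoint A) (mat_adjoint B) $$ (i, j)"
    using i j id im A B unfolding kron_def by simp
qed (use A B in \<open>auto simp: kron_def\<close>)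

theorem corollary4:
  fixes m n :: nat and TA TB H K :: "complex mat" and psi0 :: "complex vec"
    and \<epsilon> t :: real
  assumes "TA \<in> carrier_mat m m" and "TB \<in> carrier_mat n n"
    and "self_adjoint TA" and "self_adjoint TB"
    and K_def: "K = kron TA (1\<^sub>m n) - kron (1\<^sub>m m) TB"
    and "K \<noteq> 0\<^sub>m (m * n) (m * n)"
    and "\<epsilon> \<ge> 0"
    and "H \<in> carrier_mat (m * n) (m * n)" and "self_adjoint H"
    and "opnorm (H * K - K * H) \<le> \<epsilon>"
    and "psi0 \<in> mat_kernel K" and "vnorm psi0 = 1"
  shows "(vnorm (orth_proj (mat_kernel K) (mexp ((- \<i> * complex_of_real t) \<cdot>\<^sub>m H) *\<^sub>v psi0)))\<^sup>2
           \<ge> 1 - \<epsilon>\<^sup>2 * t\<^sup>2 / (spectral_gap K)\<^sup>2"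
proof -
  note TA = assms(1) and TB = assms(2) and TAh = assms(3) and TBh = assms(4)
  note K0 = assms(6) and e = assms(7) and H = assms(8) and Hh = assms(9) and Cb = assms(10)
  note psiK = assms(11) and n1 = assms(12)
  define N where "N = m * n"
  have k1: "kron TA (1\<^sub>m n) \<in> carrier_mat N N" unfolding N_def using kron_carrier[OF TA, of "1\<^sub>m n" n] by simp
  have k2: "kron (1\<^sub>m m) TB \<in> carrier_mat N N" unfolding N_def using kron_carrier[OF _ TB, of "1\<^sub>m m" m] by simp
  have Kc: "K \<in> carrier_mat N N" unfolding K_def using minus_carrier_mat[OF k2] .
  have TAa: "mat_adjoint TA = TA" and TBa: "mat_adjoint TB = TB"
    using TAh TBh unfolding self_adjoint_def by auto
  have Kh: "mat_adjoint K = K"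
  proof -
    have "mat_adjoint K = mat_adjoint (kron TA (1\<^sub>m n)) - mat_adjoint (kron (1\<^sub>m m) TB)"
      unfolding K_def by (rule adj_minus[OF k1 k2])
    also have "\<dots> = K" unfolding K_def kron_adj[OF TA one_carrier_mat] kron_adj[OF one_carrier_mat TB]
      TAa TBa adj_one ..
    finally show ?thesis .
  qed
  have Hc: "H \<in> carrier_mat N N" using H unfolding N_def .
  have Ha: "mat_adjoint H = H" using Hh unfolding self_adjoint_def by auto
  have psi: "psi0 \<in> carrier_vec N" and Kpsi: "K *\<^sub>v psi0 = 0\<^sub>v N"
    using psiK Kc unfolding mat_kernel_def by auto
  have K0': "K \<noteq> 0\<^sub>m N N" using K0 unfolding N_def .
  define x where "x = mexp ((- \<i> * complex_of_real t) \<cdot>\<^sub>m H) *\<^sub>v psi0"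
  have Mc: "mexp ((- \<i> * complex_of_real t) \<cdot>\<^sub>m H) \<in> carrier_mat N N" using Hc unfolding mexp_def by simp
  have xc: "x \<in> carrier_vec N" unfolding x_def using mult_mat_vec_carrier[OF Mc psi] .
  have x1: "vnorm x = 1" unfolding x_def by (rule dynamics(1)[OF Hc Ha Kc Cb e psi Kpsi n1])
  have xK: "vnorm (K *\<^sub>v x) \<le> \<epsilon> * \<bar>t\<bar>" unfolding x_def by (rule dynamics(2)[OF Hc Ha Kc Cb e psi Kpsi n1])
  define \<kappa> where "\<kappa> = spectral_gap K"
  define d where "d = vnorm (x - orth_proj (mat_kernel K) x)"
  have kp: "\<kappa> > 0" unfolding \<kappa>_def by (rule herm_gap(1)[OF Kc Kh K0'])
  have pn: "(vnorm (orth_proj (mat_kernel K) x))^2 = 1 - d^2"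
    using herm_gap(3)[OF Kc Kh K0' xc] x1 unfolding d_def by simp
  have "\<kappa> * d \<le> \<epsilon> * \<bar>t\<bar>" using herm_gap(4)[OF Kc Kh K0' xc] xK unfolding \<kappa>_def d_def by simp
  hence "d \<le> \<epsilon> * \<bar>t\<bar> / \<kappa>" using kp by (simp add: field_simps)
  moreover have "d \<ge> 0" unfolding d_def by (rule vnorm_nonneg)
  ultimately have "d^2 \<le> (\<epsilon> * \<bar>t\<bar> / \<kappa>)^2" by (intro power_mono) auto
  also have "\<dots> = \<epsilon>\<^sup>2 * t\<^sup>2 / \<kappa>\<^sup>2" by (simp add: power_mult_distrib power_divide)
  finally show ?thesis using pn unfolding x_def \<kappa>_def by simp
qed

end
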